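(* Let $f_{\mathbf{U}}$ be a probability density on $\mathbb{R}^d$ (the reference) and $f_{\mathbf{X}_1},\dots,f_{\mathbf{X}_L}$ probability densities on $\mathbb{R}^d$. Let $\mathcal{Q}_1,\dots,\mathcal{Q}_L$ be diffeomorphisms of $\mathbb{R}^d$ and set $\mathcal{T}_\ell=\mathcal{Q}_1\circ\cdots\circ\mathcal{Q}_\ell$. Assume there are constants $\eta\in(0,1)$ and $\omega\in[0,1)$ such that (a) $D_{\mathrm H}(f_{\mathbf{X}_\ell},f_{\mathbf{X}_{\ell+1}})\le\eta$ for all $1\le\ell<L$; (b) $D_{\mathrm H}\big((\mathcal{Q}_{\ell+1})_\sharp f_{\mathbf{U}},\mathcal{T}_\ell^\sharp f_{\mathbf{X}_{\ell+1}}\big)\le\omega\,D_{\mathrm H}\big(f_{\mathbf{U}},\mathcal{T}_\ell^\sharp f_{\mathbf{X}_{\ell+1}}\big)$ for all $1\le\ell<L$; (c) $D_{\mathrm H}\big((\mathcal{Q}_1)_\sharp f_{\mathbf{U}},f_{\mathbf{X}_1}\big)\le\omega\eta$. Then $D_{\mathrm H}\big((\mathcal{T}_L)_\sharp f_{\mathbf{U}},f_{\mathbf{X}_L}\big)\le\frac{\omega}{1-\omega}\eta$.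
   Context: Hellinger distance between densities $f,h$ on $\mathbb{R}^d$: $D_{\mathrm H}(f,h)=\big(\tfrac12\int(\sqrt{f(\mathbf{x})}-\sqrt{h(\mathbf{x})})^2\,\mathrm{d}\mathbf{x}\big)^{1/2}$. For a diffeomorphism $\mathcal{S}$, the pushforward density is $\mathcal{S}_\sharp f(\mathbf{u})=f(\mathcal{S}^{-1}(\mathbf{u}))\,|\det\nabla\mathcal{S}^{-1}(\mathbf{u})|$ (the density of $\mathcal{S}(\mathbf{X})$ when $\mathbf{X}\sim f$) and the pullback density is $\mathcal{S}^\sharp f(\mathbf{x})=f(\mathcal{S}(\mathbf{x}))\,|\det\nabla\mathcal{S}(\mathbf{x})|$ (the density of $\mathcal{S}^{-1}(\mathbf{X})$). *)

theory Defs
  imports "HOL-Analysis.Analysis"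
begin

definition is_density :: "(real^'n \<Rightarrow> real) \<Rightarrow> bool" where
  "is_density f \<longleftrightarrow> f \<in> borel_measurable lborel \<and> (\<forall>x. 0 \<le> f x)
     \<and> integrable lborel f \<and> integral\<^sup>L lborel f = 1"

definition hellinger :: "(real^'n \<Rightarrow> real) \<Rightarrow> (real^'n \<Rightarrow> real) \<Rightarrow> real" where
  "hellinger f h = sqrt ((1/2) * integral\<^sup>L lborel (\<lambda>x. (sqrt (f x) - sqrt (h x))^2))"

definition jac_det :: "(real^'n \<Rightarrow> real^'n) \<Rightarrow> real^'n \<Rightarrow> real" where
  "jac_det S x = det (matrix (frechet_derivative S (at x)))"

definition diffeo :: "(real^'n \<Rightarrow> real^'n) \<Rightarrow> bool" where
  "diffeo S \<longleftrightarrow> bij S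
     \<and> (\<forall>x. S differentiable (at x))
     \<and> continuous_on UNIV (\<lambda>x. matrix (frechet_derivative S (at x)))
     \<and> (\<forall>y. inv S differentiable (at y))
     \<and> continuous_on UNIV (\<lambda>y. matrix (frechet_derivative (inv S) (at y)))"

definition pushfwd :: "(real^'n \<Rightarrow> real^'n) \<Rightarrow> (real^'n \<Rightarrow> real) \<Rightarrow> (real^'n \<Rightarrow> real)" where
  "pushfwd S f = (\<lambda>u. f (inv S u) * \<bar>jac_det (inv S) u\<bar>)"

definition pullback :: "(real^'n \<Rightarrow> real^'n) \<Rightarrow> (real^'n \<Rightarrow> real) \<Rightarrow> (real^'n \<Rightarrow> real)" where
  "pullback S f = (\<lambda>x. f (S x) * \<bar>jac_det S x\<bar>)"

primrec comp_upto :: "(nat \<Rightarrow> ('a \<Rightarrow> 'a)) \<Rightarrow> nat \<Rightarrow> ('a \<Rightarrow> 'a)" where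
  "comp_upto Q 0 = id"
| "comp_upto Q (Suc l) = comp_upto Q l \<circ> Q (Suc l)"

end

theory Submission imports Defs "HOL-Library.Countable" "HOL-Combinatorics.Permutations" begin

typedef 'a wo = "UNIV :: 'a set" by auto

instantiation wo :: (finite) linorder
begin
definition less_eq_wo :: "'a wo \<Rightarrow> 'a wo \<Rightarrow> bool" where
  "less_eq_wo x y \<longleftrightarrow> to_nat (Rep_wo x) \<le> to_nat (Rep_wo y)"
definition less_wo :: "'a wo \<Rightarrow> 'a wo \<Rightarrow> bool" where
  "less_wo x y \<longleftrightarrow> to_nat (Rep_wo x) < to_nat (Rep_wo y)"
instance
proof
  fix x y :: "'a wo"
  show "x \<le> y \<Longrightarrow> y \<le> x \<Longrightarrow> x = y"
    unfolding less_eq_wo_def by (metis le_antisym Rep_wo_inject to_nat_split)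
qed (auto simp: less_eq_wo_def less_wo_def)
end

instance wo :: (finite) finite
proof
  have "(UNIV :: 'a wo set) = Abs_wo ` UNIV"
    by (metis Abs_wo_cases surjI surj_def)
  then show "finite (UNIV :: 'a wo set)" by (metis finite finite_imageI)
qed

instance wo :: (finite) wellorder
proof
  fix P :: "'a wo \<Rightarrow> bool" and a
  assume H: "\<And>x. (\<And>y. y < x \<Longrightarrow> P y) \<Longrightarrow> P x"
  show "P a"
  proof (induct "to_nat (Rep_wo a)" arbitrary: a rule: less_induct)
    case less
    show ?case
    proof (rule H)
      fix y assume "y < a"
      then have "to_nat (Rep_wo y) < to_nat (Rep_wo a)" by (simp add: less_wo_def)
      then show "P y" using less by blast
    qed
  qed
qed

definition V :: "real^'n \<Rightarrow> real^('n wo)" where "V x = (\<chi> i. x $ Rep_wo i)"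
definition W :: "real^('n wo) \<Rightarrow> real^'n" where "W y = (\<chi> j. y $ Abs_wo j)"

lemma VW[simp]: "V (W y) = y" by (simp add: V_def W_def Rep_wo_inverse vec_eq_iff)
lemma WV[simp]: "W (V x) = x" by (simp add: V_def W_def Abs_wo_inverse vec_eq_iff)
lemma linear_V: "linear V" by (auto simp: V_def linear_iff vec_eq_iff)
lemma linear_W: "linear W" by (auto simp: W_def linear_iff vec_eq_iff)

lemma det_reindex:
  fixes A :: "real^'n^'n"
  shows "det (\<chi> i j. A $ Rep_wo i $ Rep_wo j) = det A"
proof -
  let ?P = "{p. p permutes (UNIV :: 'n set)}"
  let ?m = "\<lambda>p::'n\<Rightarrow>'n. (\<lambda>x::'n wo. Abs_wo (p (Rep_wo x)))"
  have bij: "bij_betw ?m ?P {q. q permutes (UNIV :: 'n wo set)}"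
  proof (rule bij_betw_byWitness[where f' = "\<lambda>q x. Rep_wo (q (Abs_wo x))"])
    show "\<forall>a\<in>?P. (\<lambda>x. Rep_wo (?m a (Abs_wo x))) = a"
      by (simp add: Abs_wo_inverse)
    show "\<forall>a'\<in>{q. q permutes (UNIV :: 'n wo set)}. ?m (\<lambda>x. Rep_wo (a' (Abs_wo x))) = a'"
      by (simp add: Rep_wo_inverse)
    show "?m ` ?P \<subseteq> {q. q permutes (UNIV :: 'n wo set)}"
    proof (clarsimp simp: permutes_univ)
      fix p :: "'n \<Rightarrow> 'n" and y :: "'n wo"
      assume "\<forall>y. \<exists>!x. p x = y"
      then obtain x where "p x = Rep_wo y" "\<And>x'. p x' = Rep_wo y \<Longrightarrow> x' = x" by metis
      then show "\<exists>!x. Abs_wo (p (Rep_wo x)) = y"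
        by (metis Abs_wo_inverse Rep_wo_inverse Abs_wo_inject UNIV_I)
    qed
    show "(\<lambda>q x. Rep_wo (q (Abs_wo x))) ` {q. q permutes (UNIV :: 'n wo set)} \<subseteq> ?P"
    proof (clarsimp simp: permutes_univ)
      fix q :: "'n wo \<Rightarrow> 'n wo" and y :: "'n"
      assume "\<forall>y. \<exists>!x. q x = y"
      then obtain x where "q x = Abs_wo y" "\<And>x'. q x' = Abs_wo y \<Longrightarrow> x' = x" by metis
      then show "\<exists>!x. Rep_wo (q (Abs_wo x)) = y"
        by (metis Abs_wo_inverse Rep_wo_inverse UNIV_I)
    qed
  qed
  have sg: "sign (?m p) = sign p" if "p permutes UNIV" for p
  proof -
    have "permutes_bij_finite p UNIV UNIV Abs_wo Rep_wo"
      by (intro permutes_bij_finite.intro permutes_bij.intro permutes_bij_finite_axioms.intro) (auto simp: that bij_betw_def Abs_wo_inverse inj_on_def Abs_wo_inject Rep_wo_inverse intro: Abs_wo_cases)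
    from permutes_bij_finite.sign_p'[OF this] show ?thesis by simp
  qed
  have pr: "(\<Prod>i\<in>UNIV. A $ Rep_wo i $ Rep_wo (?m p i)) = (\<Prod>j\<in>UNIV. A $ j $ p j)" for p
  proof -
    have "(\<Prod>i\<in>UNIV. A $ Rep_wo i $ Rep_wo (?m p i)) = (\<Prod>i\<in>UNIV. A $ Rep_wo i $ p (Rep_wo i))"
      by (simp add: Abs_wo_inverse)
    also have "\<dots> = (\<Prod>j\<in>Rep_wo ` UNIV. A $ j $ p j)"
      by (rule prod.reindex[symmetric, unfolded o_def]) (simp add: inj_def Rep_wo_inject)
    also have "Rep_wo ` UNIV = UNIV" by (simp add: type_definition.Rep_range[OF type_definition_wo])
    finally show ?thesis by simp
  qed
  show ?thesis
    unfolding det_def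
  proof (subst sum.reindex_bij_betw[OF bij, symmetric], rule sum.cong[OF refl])
    fix p assume "p \<in> ?P"
    then have "p permutes UNIV" by simp
    then show "of_int (sign (?m p)) * (\<Prod>i\<in>UNIV. (\<chi> i j. A $ Rep_wo i $ Rep_wo j) $ i $ ?m p i)
       = of_int (sign p) * (\<Prod>i\<in>UNIV. A $ i $ p i)"
      using sg pr by (simp only: vec_lambda_beta)
  qed
qed

lemma prod_Basis_cart:
  fixes l u :: "real^'n"
  shows "(\<Prod>b\<in>Basis. (u - l) \<bullet> b) = (\<Prod>i\<in>UNIV. u $ i - l $ i)"
  by (simp add: Basis_vec_def cart_eq_inner_axis axis_eq_axis prod.UNION_disjoint inner_diff_left)

lemma W_meas[measurable]: "W \<in> borel_measurable borel"
  by (intro borel_measurable_continuous_onI linear_continuous_on) (simp add: linear_conv_bounded_linear[symmetric] linear_W)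

lemma V_meas[measurable]: "V \<in> borel_measurable borel"
  by (intro borel_measurable_continuous_onI linear_continuous_on) (simp add: linear_conv_bounded_linear[symmetric] linear_V)

lemma Rep_wo_range: "range Rep_wo = UNIV"
  by (simp add: type_definition.Rep_range[OF type_definition_wo])

lemma prod_Rep_wo: "(\<Prod>i\<in>UNIV. f (Rep_wo i)) = (\<Prod>j\<in>UNIV. f j :: real)"
proof -
  have "(\<Prod>i\<in>UNIV. f (Rep_wo i)) = (\<Prod>j\<in>Rep_wo ` UNIV. f j)"
    by (rule prod.reindex[symmetric, unfolded o_def]) (simp add: inj_def Rep_wo_inject)
  then show ?thesis by (simp add: Rep_wo_range)
qed

lemma lborel_W: "distr lborel borel W = (lborel :: (real^'n) measure)"
proof (rule lborel_eqI[symmetric])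
  fix l u :: "real^'n"
  assume le: "\<And>b. b \<in> Basis \<Longrightarrow> l \<bullet> b \<le> u \<bullet> b"
  have le': "l $ i \<le> u $ i" for i
  proof -
    have "axis i (1::real) \<in> Basis" by simp
    from le[OF this] show ?thesis by (simp add: cart_eq_inner_axis)
  qed
  have pre: "W -` box l u = box (V l) (V u)"
  proof -
    have "x \<in> W -` box l u \<longleftrightarrow> x \<in> box (V l) (V u)" for x
    proof -
      have "x \<in> W -` box l u \<longleftrightarrow> (\<forall>j. l $ j < x $ Abs_wo j \<and> x $ Abs_wo j < u $ j)"
        by (simp add: mem_box_cart W_def)
      also have "\<dots> \<longleftrightarrow> (\<forall>i. l $ Rep_wo i < x $ i \<and> x $ i < u $ Rep_wo i)"
        by (metis Abs_wo_inverse Rep_wo_inverse UNIV_I)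
      also have "\<dots> \<longleftrightarrow> x \<in> box (V l) (V u)"
        by (simp add: mem_box_cart V_def)
      finally show ?thesis .
    qed
    then show ?thesis by blast
  qed
  have "emeasure (distr lborel borel W) (box l u) = emeasure lborel (box (V l) (V u))"
    by (simp add: emeasure_distr pre)
  also have "\<dots> = (\<Prod>b\<in>Basis. (V u - V l) \<bullet> b)"
  proof -
    have "\<forall>b\<in>Basis. V l \<bullet> b \<le> V u \<bullet> b"
      using le' by (auto simp: Basis_vec_def cart_eq_inner_axis[symmetric] V_def)
    then show ?thesis by (simp add: emeasure_lborel_box_eq)
  qed
  also have "\<dots> = (\<Prod>i\<in>UNIV. u $ Rep_wo i - l $ Rep_wo i)"
    by (simp add: prod_Basis_cart V_def)
  also have "\<dots> = (\<Prod>i\<in>UNIV. u $ i - l $ i)"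
    using prod_Rep_wo[of "\<lambda>i. u $ i - l $ i"] by simp
  also have "\<dots> = (\<Prod>b\<in>Basis. (u - l) \<bullet> b)"
    by (simp add: prod_Basis_cart)
  finally show "emeasure (distr lborel borel W) (box l u) = (\<Prod>b\<in>Basis. (u - l) \<bullet> b)" .
qed simp

lemma nn_integral_W:
  fixes f :: "real^'n \<Rightarrow> ennreal"
  assumes [measurable]: "f \<in> borel_measurable borel"
  shows "(\<integral>\<^sup>+x. f x \<partial>lborel) = (\<integral>\<^sup>+y. f (W y) \<partial>lborel)"
proof -
  have "(\<integral>\<^sup>+x. f x \<partial>lborel) = (\<integral>\<^sup>+x. f x \<partial>(distr lborel borel W))"
    by (simp add: lborel_W)
  also have "\<dots> = (\<integral>\<^sup>+y. f (W y) \<partial>lborel)"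
    by (rule nn_integral_distr) auto
  finally show ?thesis .
qed


lemma cov_wo:
  fixes g :: "real^'m::{finite,wellorder} \<Rightarrow> real^'m::_" and h :: "real^'m::_ \<Rightarrow> real"
  assumes der: "\<And>x. (g has_derivative g' x) (at x)"
    and derk: "\<And>y. (k has_derivative k' y) (at y)"
    and kg: "\<And>x. k (g x) = x" and gk: "\<And>y. g (k y) = y"
    and kid: "\<And>y. k' y \<circ> g' (k y) = id"
    and h[measurable]: "h \<in> borel_measurable borel" and hnn: "\<And>y. 0 \<le> h y"
    and D[measurable]: "(\<lambda>x. \<bar>det (matrix (g' x))\<bar> * h (g x)) \<in> borel_measurable borel"
  shows "(\<integral>\<^sup>+y. ennreal (h y) \<partial>lborel) = (\<integral>\<^sup>+x. ennreal (\<bar>det (matrix (g' x))\<bar> * h (g x)) \<partial>lborel)"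
proof -
  let ?D = "\<lambda>x. \<bar>det (matrix (g' x))\<bar> * h (g x)"
  have Dnn: "0 \<le> ?D x" for x using hnn by simp
  have cov: "((?D has_integral b) UNIV) \<longleftrightarrow> ((h has_integral b) UNIV)" for b
    by (rule cov_invertible_nonneg_eq[where g=g and g'=g' and h=k and h'=k' and S=UNIV and T=UNIV and f=h]) (use der derk kg gk kid hnn in auto)
  show ?thesis
  proof (cases "(\<integral>\<^sup>+x. ennreal (?D x) \<partial>lborel) < \<infinity>")
    case True
    then obtain r where r: "(\<integral>\<^sup>+x. ennreal (?D x) \<partial>lborel) = ennreal r" "0 \<le> r"
      by (cases "(\<integral>\<^sup>+x. ennreal (?D x) \<partial>lborel)" rule: ennreal_cases) auto
    have "(?D has_integral r) UNIV"
      by (rule nn_integral_has_integral) (use r Dnn in auto)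
    then have "(h has_integral r) UNIV" using cov by blast
    then have "(\<integral>\<^sup>+x. ennreal (h x) \<partial>lborel) = r"
      by (rule nn_integral_has_integral_lborel[rotated 2]) (use hnn in auto)
    with r show ?thesis by simp
  next
    case False
    show ?thesis
    proof (cases "(\<integral>\<^sup>+x. ennreal (h x) \<partial>lborel) < \<infinity>")
      case True
      then obtain r where r: "(\<integral>\<^sup>+x. ennreal (h x) \<partial>lborel) = ennreal r" "0 \<le> r"
        by (cases "(\<integral>\<^sup>+x. ennreal (h x) \<partial>lborel)" rule: ennreal_cases) auto
      have "(h has_integral r) UNIV"
        by (rule nn_integral_has_integral) (use r hnn in auto)
      then have "(?D has_integral r) UNIV" using cov by blast
      then have "(\<integral>\<^sup>+x. ennreal (?D x) \<partial>lborel) = r"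
        by (rule nn_integral_has_integral_lborel[rotated 2]) (use Dnn in auto)
      with False show ?thesis by simp
    next
      case False2: False
      with False show ?thesis by (simp add: less_top[symmetric])
    qed
  qed
qed


lemma continuous_on_det:
  fixes M :: "'a::topological_space \<Rightarrow> real^'n^'n"
  assumes "continuous_on S M"
  shows "continuous_on S (\<lambda>x. det (M x))"
  unfolding det_def by (intro continuous_intros assms)

lemma diffeo_bij: "diffeo T \<Longrightarrow> bij T" by (simp add: diffeo_def)

lemma diffeo_der: "diffeo T \<Longrightarrow> (T has_derivative frechet_derivative T (at x)) (at x)"
  by (simp add: diffeo_def frechet_derivative_works[symmetric])

lemma diffeo_der_inv: "diffeo T \<Longrightarrow> (inv T has_derivative frechet_derivative (inv T) (at y)) (at y)"
  by (simp add: diffeo_def frechet_derivative_works[symmetric])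

lemma diffeo_inv_id:
  assumes "diffeo T"
  shows "frechet_derivative (inv T) (at (T x)) \<circ> frechet_derivative T (at x) = id"
proof -
  have "(inv T \<circ> T has_derivative (frechet_derivative (inv T) (at (T x)) \<circ> frechet_derivative T (at x))) (at x)"
    by (rule diff_chain_at[OF diffeo_der[OF assms] diffeo_der_inv[OF assms]])
  moreover have "inv T \<circ> T = id"
    using diffeo_bij[OF assms] by (simp add: bij_is_inj inv_o_cancel)
  ultimately have "(id has_derivative (frechet_derivative (inv T) (at (T x)) \<circ> frechet_derivative T (at x))) (at x)"
    by simp
  moreover have "(id has_derivative id) (at x)" by (rule has_derivative_id)
  ultimately show ?thesis by (rule has_derivative_unique)
qed

lemma jac_inv:
  assumes "diffeo T"
  shows "\<bar>jac_det (inv T) (T x)\<bar> * \<bar>jac_det T x\<bar> = 1"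
proof -
  have l1: "linear (frechet_derivative T (at x))"
    using has_derivative_linear[OF diffeo_der[OF assms]] .
  have l2: "linear (frechet_derivative (inv T) (at (T x)))"
    using has_derivative_linear[OF diffeo_der_inv[OF assms]] .
  have "jac_det (inv T) (T x) * jac_det T x = det (matrix (frechet_derivative (inv T) (at (T x)) \<circ> frechet_derivative T (at x)))"
    unfolding jac_det_def by (simp add: matrix_compose[OF l1 l2] det_mul)
  also have "\<dots> = 1" by (simp add: diffeo_inv_id[OF assms])
  finally show ?thesis by (metis abs_mult abs_one)
qed

lemma jac_cont:
  assumes "diffeo T"
  shows "continuous_on UNIV (jac_det T)" "continuous_on UNIV (jac_det (inv T))"
  using assms unfolding diffeo_def jac_det_def
  by (auto intro!: continuous_on_det)

lemma jac_meas[measurable]: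
  assumes "diffeo T"
  shows "jac_det T \<in> borel_measurable borel" "jac_det (inv T) \<in> borel_measurable borel"
  using jac_cont[OF assms] by (auto intro: borel_measurable_continuous_onI)

lemma diffeo_cont:
  assumes "diffeo T"
  shows "continuous_on UNIV T" "continuous_on UNIV (inv T)"
proof -
  show "continuous_on UNIV T"
    using assms unfolding diffeo_def by (meson differentiable_imp_continuous_within continuous_at_imp_continuous_on)
  show "continuous_on UNIV (inv T)"
    using assms unfolding diffeo_def by (meson differentiable_imp_continuous_within continuous_at_imp_continuous_on)
qed

lemma diffeo_meas[measurable]:
  assumes "diffeo T"
  shows "T \<in> borel_measurable borel" "inv T \<in> borel_measurable borel"
  using diffeo_cont[OF assms] by (auto intro: borel_measurable_continuous_onI)


lemma W_axis: "W (axis j 1) = axis (Rep_wo j) (1::real)"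
  by (auto simp: W_def vec_eq_iff axis_def Abs_wo_inverse Rep_wo_inverse)

lemma matrix_VLW: "matrix (\<lambda>v. V (L (W v))) = (\<chi> i j. matrix L $ Rep_wo i $ Rep_wo j)"
  by (simp add: matrix_def vec_eq_iff V_def W_axis)

lemma diffeo_inv_f_f: "diffeo T \<Longrightarrow> inv T (T x) = x"
  by (simp add: diffeo_def bij_is_inj)

lemma diffeo_f_inv_f: "diffeo T \<Longrightarrow> T (inv T y) = y"
  by (simp add: diffeo_def bij_is_surj surj_f_inv_f)

lemma cov:
  fixes T :: "real^'n \<Rightarrow> real^'n" and h :: "real^'n \<Rightarrow> real"
  assumes dT: "diffeo T" and h[measurable]: "h \<in> borel_measurable borel" and hnn: "\<And>y. 0 \<le> h y"
  shows "(\<integral>\<^sup>+y. ennreal (h y) \<partial>lborel) = (\<integral>\<^sup>+x. ennreal (\<bar>jac_det T x\<bar> * h (T x)) \<partial>lborel)"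
proof -
  define DT where "DT x = frechet_derivative T (at x)" for x
  define DI where "DI y = frechet_derivative (inv T) (at y)" for y
  define g where "g y = V (T (W y))" for y
  define g' where "g' y = (\<lambda>v. V (DT (W y) (W v)))" for y
  define k where "k y = V (inv T (W y))" for y
  define k' where "k' y = (\<lambda>v. V (DI (W y) (W v)))" for y
  note [measurable] = diffeo_meas[OF dT] jac_meas[OF dT]
  have der: "(g has_derivative g' y) (at y)" for y
  proof -
    have 1: "(W has_derivative W) (at y)" by (rule linear_imp_has_derivative[OF linear_W])
    have 2: "(T has_derivative DT (W y)) (at (W y))" using diffeo_der[OF dT] by (simp add: DT_def)
    have 3: "(V has_derivative V) (at ((T \<circ> W) y))" by (rule linear_imp_has_derivative[OF linear_V])
    from diff_chain_at[OF diff_chain_at[OF 1 2] 3] show ?thesis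
      by (simp add: g_def[abs_def] g'_def o_def)
  qed
  have derk: "(k has_derivative k' y) (at y)" for y
  proof -
    have 1: "(W has_derivative W) (at y)" by (rule linear_imp_has_derivative[OF linear_W])
    have 2: "(inv T has_derivative DI (W y)) (at (W y))" using diffeo_der_inv[OF dT] by (simp add: DI_def)
    have 3: "(V has_derivative V) (at ((inv T \<circ> W) y))" by (rule linear_imp_has_derivative[OF linear_V])
    from diff_chain_at[OF diff_chain_at[OF 1 2] 3] show ?thesis
      by (simp add: k_def[abs_def] k'_def o_def)
  qed
  have kg: "k (g x) = x" for x by (simp add: k_def g_def diffeo_inv_f_f[OF dT])
  have gk: "g (k y) = y" for y by (simp add: k_def g_def diffeo_f_inv_f[OF dT])
  have kid: "k' y \<circ> g' (k y) = id" for y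
  proof -
    have "DI (T (inv T (W y))) \<circ> DT (inv T (W y)) = id"
      using diffeo_inv_id[OF dT] by (simp add: DI_def DT_def)
    then have "DI (W y) (DT (inv T (W y)) v) = v" for v
      by (metis diffeo_f_inv_f[OF dT] comp_apply id_apply)
    then show ?thesis by (simp add: fun_eq_iff k'_def g'_def k_def)
  qed
  have detg: "det (matrix (g' y)) = jac_det T (W y)" for y
    by (simp add: g'_def matrix_VLW det_reindex jac_det_def DT_def)
  have eqD: "\<bar>det (matrix (g' y))\<bar> * h (W (g y)) = \<bar>jac_det T (W y)\<bar> * h (T (W y))" for y
    by (simp add: detg g_def)
  have Dm: "(\<lambda>y. \<bar>det (matrix (g' y))\<bar> * h (W (g y))) \<in> borel_measurable borel"
    unfolding eqD by measurable
  have "(\<integral>\<^sup>+y. ennreal (h y) \<partial>lborel) = (\<integral>\<^sup>+y. ennreal (h (W y)) \<partial>lborel)"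
    by (rule nn_integral_W) measurable
  also have "\<dots> = (\<integral>\<^sup>+y. ennreal (\<bar>det (matrix (g' y))\<bar> * h (W (g y))) \<partial>lborel)"
    by (rule cov_wo[OF der derk kg gk kid _ _ Dm]) (use hnn in auto)
  also have "\<dots> = (\<integral>\<^sup>+y. ennreal (\<bar>jac_det T (W y)\<bar> * h (T (W y))) \<partial>lborel)"
    by (simp add: eqD)
  also have "\<dots> = (\<integral>\<^sup>+x. ennreal (\<bar>jac_det T x\<bar> * h (T x)) \<partial>lborel)"
    by (rule nn_integral_W[symmetric, where f="\<lambda>x. ennreal (\<bar>jac_det T x\<bar> * h (T x))"]) measurable
  finally show ?thesis .
qed


lemma cont_mm:
  fixes X Y :: "'a::topological_space \<Rightarrow> real^'n^'n"
  assumes "continuous_on S X" "continuous_on S Y"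
  shows "continuous_on S (\<lambda>x. X x ** Y x)"
  unfolding matrix_matrix_mult_def by (intro continuous_intros assms)

lemma diffeo_id: "diffeo (id :: real^'n \<Rightarrow> real^'n)"
proof -
  have "id differentiable at x" for x :: "real^'n"
    unfolding differentiable_def using has_derivative_id by blast
  then show ?thesis unfolding diffeo_def by (simp add: inv_id)
qed

lemma fd_comp:
  assumes "\<And>x. A differentiable at x" "\<And>x. B differentiable at x"
  shows "frechet_derivative (A \<circ> B) (at x) = frechet_derivative A (at (B x)) \<circ> frechet_derivative B (at x)"
  by (rule frechet_derivative_compose) (use assms in auto)

lemma matrix_fd_comp:
  fixes A B :: "real^'n \<Rightarrow> real^'n"
  assumes "\<And>x. A differentiable at x" "\<And>x. B differentiable at x"
  shows "matrix (frechet_derivative (A \<circ> B) (at x)) = matrix (frechet_derivative A (at (B x))) ** matrix (frechet_derivative B (at x))"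
proof -
  have "linear (frechet_derivative A (at (B x)))" "linear (frechet_derivative B (at x))"
    using assms linear_frechet_derivative by blast+
  then show ?thesis
    by (simp add: fd_comp[OF assms] matrix_compose)
qed

lemma diffeo_comp:
  fixes A B :: "real^'n \<Rightarrow> real^'n"
  assumes dA: "diffeo A" and dB: "diffeo B"
  shows "diffeo (A \<circ> B)"
proof -
  have bA: "bij A" and bB: "bij B" using dA dB by (simp_all add: diffeo_def)
  have dfA: "\<And>x. A differentiable at x" and dfB: "\<And>x. B differentiable at x"
    and dfiA: "\<And>x. inv A differentiable at x" and dfiB: "\<And>x. inv B differentiable at x"
    using dA dB by (simp_all add: diffeo_def)
  have cA: "continuous_on UNIV (\<lambda>x. matrix (frechet_derivative A (at x)))"
    and cB: "continuous_on UNIV (\<lambda>x. matrix (frechet_derivative B (at x)))"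
    and ciA: "continuous_on UNIV (\<lambda>x. matrix (frechet_derivative (inv A) (at x)))"
    and ciB: "continuous_on UNIV (\<lambda>x. matrix (frechet_derivative (inv B) (at x)))"
    using dA dB by (simp_all add: diffeo_def)
  have inv: "inv (A \<circ> B) = inv B \<circ> inv A" using bA bB by (simp add: o_inv_distrib)
  have d1: "(A \<circ> B) differentiable at x" for x
    using dfA dfB by (metis differentiable_chain_at)
  have d2: "(inv B \<circ> inv A) differentiable at x" for x
    using dfiA dfiB by (metis differentiable_chain_at)
  have c1: "continuous_on UNIV (\<lambda>x. matrix (frechet_derivative (A \<circ> B) (at x)))"
  proof -
    have "continuous_on UNIV (\<lambda>x. matrix (frechet_derivative A (at (B x))))"
      using continuous_on_compose[OF diffeo_cont(1)[OF dB] cA[THEN continuous_on_subset]]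
      by (simp add: o_def)
    then show ?thesis
      by (simp add: matrix_fd_comp[OF dfA dfB] cont_mm cB)
  qed
  have c2: "continuous_on UNIV (\<lambda>x. matrix (frechet_derivative (inv B \<circ> inv A) (at x)))"
  proof -
    have "continuous_on UNIV (\<lambda>x. matrix (frechet_derivative (inv B) (at (inv A x))))"
      using continuous_on_compose[OF diffeo_cont(2)[OF dA] ciB[THEN continuous_on_subset]]
      by (simp add: o_def)
    then show ?thesis
      by (simp add: matrix_fd_comp[OF dfiB dfiA] cont_mm ciA)
  qed
  show ?thesis
    unfolding diffeo_def inv using bA bB d1 d2 c1 c2 by (simp add: bij_comp)
qed

lemma jac_det_comp:
  fixes A B :: "real^'n \<Rightarrow> real^'n"
  assumes "\<And>x. A differentiable at x" "\<And>x. B differentiable at x"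
  shows "jac_det (A \<circ> B) x = jac_det A (B x) * jac_det B x"
  by (simp add: jac_det_def matrix_fd_comp[OF assms] det_mul)

lemma pushfwd_comp:
  fixes A B :: "real^'n \<Rightarrow> real^'n"
  assumes dA: "diffeo A" and dB: "diffeo B"
  shows "pushfwd (A \<circ> B) g = pushfwd A (pushfwd B g)"
proof -
  have inv: "inv (A \<circ> B) = inv B \<circ> inv A" using dA dB by (simp add: o_inv_distrib diffeo_def)
  have dfiA: "\<And>x. inv A differentiable at x" and dfiB: "\<And>x. inv B differentiable at x"
    using dA dB by (simp_all add: diffeo_def)
  show ?thesis
    by (simp add: pushfwd_def inv jac_det_comp[OF dfiB dfiA] abs_mult fun_eq_iff mult_ac)
qed

lemma diffeo_comp_upto:
  fixes Q :: "nat \<Rightarrow> real^'n \<Rightarrow> real^'n"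
  assumes "\<And>l. l \<in> {1..L} \<Longrightarrow> diffeo (Q l)"
  shows "l \<le> L \<Longrightarrow> diffeo (comp_upto Q l)"
proof (induct l)
  case 0 then show ?case by (simp only: comp_upto.simps diffeo_id)
next
  case (Suc l)
  then have "diffeo (comp_upto Q l)" "diffeo (Q (Suc l))" using assms[of "Suc l"] by auto
  then show ?case unfolding comp_upto.simps by (rule diffeo_comp)
qed


lemma L2_CS:
  fixes a b :: "'a \<Rightarrow> real"
  assumes [measurable]: "a \<in> borel_measurable M" "b \<in> borel_measurable M"
    and ia: "integrable M (\<lambda>x. (a x)^2)" and ib: "integrable M (\<lambda>x. (b x)^2)"
  shows "integrable M (\<lambda>x. a x * b x)"
    "(\<integral>x. a x * b x \<partial>M) \<le> sqrt (\<integral>x. (a x)^2 \<partial>M) * sqrt (\<integral>x. (b x)^2 \<partial>M)"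
proof -
  have iab2: "integrable M (\<lambda>x. (a x)^2 + (b x)^2)" using ia ib by simp
  have bnd: "norm (\<bar>a x * b x\<bar>) \<le> norm ((a x)^2 + (b x)^2)" for x
  proof -
    have h0: "0 \<le> (\<bar>a x\<bar> - \<bar>b x\<bar>)^2" by simp
    have "0 \<le> \<bar>a x\<bar>^2 + \<bar>b x\<bar>^2 - 2 * \<bar>a x\<bar> * \<bar>b x\<bar>"
      using h0 by (simp only: power2_diff)
    then have "2 * (\<bar>a x\<bar> * \<bar>b x\<bar>) \<le> \<bar>a x\<bar>^2 + \<bar>b x\<bar>^2"
      by (simp add: mult.assoc)
    moreover have "0 \<le> \<bar>a x\<bar> * \<bar>b x\<bar>" by simp
    ultimately have "\<bar>a x\<bar> * \<bar>b x\<bar> \<le> (a x)^2 + (b x)^2"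
      using power2_abs[of "a x"] power2_abs[of "b x"] by linarith
    then show ?thesis by (simp add: abs_mult)
  qed
  have iabs: "integrable M (\<lambda>x. \<bar>a x * b x\<bar>)"
    by (rule Bochner_Integration.integrable_bound[OF iab2]) (use bnd in auto)
  then show iab: "integrable M (\<lambda>x. a x * b x)"
    by (rule Bochner_Integration.integrable_bound) (auto)
  let ?A = "\<integral>x. (a x)^2 \<partial>M" and ?B = "\<integral>x. (b x)^2 \<partial>M" and ?E = "\<integral>x. \<bar>a x * b x\<bar> \<partial>M"
  have A0: "0 \<le> ?A" and B0: "0 \<le> ?B" and E0: "0 \<le> ?E" by auto
  have "(\<integral>\<^sup>+x. ennreal \<bar>a x\<bar> * ennreal \<bar>b x\<bar> \<partial>M)\<^sup>2 \<le>
        (\<integral>\<^sup>+x. (ennreal \<bar>a x\<bar>)^2 \<partial>M) * (\<integral>\<^sup>+x. (ennreal \<bar>b x\<bar>)^2 \<partial>M)"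
    by (rule Cauchy_Schwarz_nn_integral) auto
  moreover have "(\<integral>\<^sup>+x. ennreal \<bar>a x\<bar> * ennreal \<bar>b x\<bar> \<partial>M) = ennreal ?E"
  proof -
    have "(\<integral>\<^sup>+x. ennreal \<bar>a x\<bar> * ennreal \<bar>b x\<bar> \<partial>M) = (\<integral>\<^sup>+x. ennreal \<bar>a x * b x\<bar> \<partial>M)"
      by (simp add: abs_mult ennreal_mult)
    also have "\<dots> = ennreal ?E" by (rule nn_integral_eq_integral[OF iabs]) auto
    finally show ?thesis .
  qed
  moreover have "(\<integral>\<^sup>+x. (ennreal \<bar>a x\<bar>)^2 \<partial>M) = ennreal ?A"
  proof -
    have "(\<integral>\<^sup>+x. (ennreal \<bar>a x\<bar>)^2 \<partial>M) = (\<integral>\<^sup>+x. ennreal ((a x)^2) \<partial>M)"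
      by (intro nn_integral_cong) (simp add: ennreal_power)
    also have "\<dots> = ennreal ?A" by (rule nn_integral_eq_integral[OF ia]) auto
    finally show ?thesis .
  qed
  moreover have "(\<integral>\<^sup>+x. (ennreal \<bar>b x\<bar>)^2 \<partial>M) = ennreal ?B"
  proof -
    have "(\<integral>\<^sup>+x. (ennreal \<bar>b x\<bar>)^2 \<partial>M) = (\<integral>\<^sup>+x. ennreal ((b x)^2) \<partial>M)"
      by (intro nn_integral_cong) (simp add: ennreal_power)
    also have "\<dots> = ennreal ?B" by (rule nn_integral_eq_integral[OF ib]) auto
    finally show ?thesis .
  qed
  ultimately have "(ennreal ?E)^2 \<le> ennreal ?A * ennreal ?B" by simp
  then have "ennreal (?E^2) \<le> ennreal (?A * ?B)"
    by (simp add: ennreal_power ennreal_mult A0 B0)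
  then have "?E^2 \<le> ?A * ?B"
    using A0 B0 by (simp add: ennreal_le_iff)
  then have "?E \<le> sqrt (?A * ?B)"
    using E0 real_le_rsqrt by blast
  moreover have "(\<integral>x. a x * b x \<partial>M) \<le> ?E"
    using iab iabs by (intro integral_mono) auto
  ultimately show "(\<integral>x. a x * b x \<partial>M) \<le> sqrt ?A * sqrt ?B"
    by (simp add: real_sqrt_mult)
qed

lemma L2_tri:
  fixes a b :: "'a \<Rightarrow> real"
  assumes [measurable]: "a \<in> borel_measurable M" "b \<in> borel_measurable M"
    and ia: "integrable M (\<lambda>x. (a x)^2)" and ib: "integrable M (\<lambda>x. (b x)^2)"
  shows "sqrt (\<integral>x. (a x + b x)^2 \<partial>M) \<le> sqrt (\<integral>x. (a x)^2 \<partial>M) + sqrt (\<integral>x. (b x)^2 \<partial>M)"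
proof -
  let ?A = "\<integral>x. (a x)^2 \<partial>M" and ?B = "\<integral>x. (b x)^2 \<partial>M" and ?C = "\<integral>x. a x * b x \<partial>M"
  note cs = L2_CS[OF assms]
  have "(\<integral>x. (a x + b x)^2 \<partial>M) = (\<integral>x. (a x)^2 + 2 * (a x * b x) + (b x)^2 \<partial>M)"
    by (simp add: power2_sum algebra_simps)
  also have "\<dots> = ?A + 2 * ?C + ?B"
    using ia ib cs(1) by simp
  also have "\<dots> \<le> ?A + 2 * (sqrt ?A * sqrt ?B) + ?B"
    using cs(2) by simp
  also have "\<dots> = (sqrt ?A + sqrt ?B)^2"
    by (simp add: power2_sum)
  finally have "sqrt (\<integral>x. (a x + b x)^2 \<partial>M) \<le> sqrt ((sqrt ?A + sqrt ?B)^2)"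
    by (rule real_sqrt_le_mono)
  also have "\<dots> = sqrt ?A + sqrt ?B" by simp
  finally show ?thesis .
qed


definition H2 :: "(real^'n \<Rightarrow> real) \<Rightarrow> (real^'n \<Rightarrow> real) \<Rightarrow> ennreal" where
  "H2 f h = (\<integral>\<^sup>+x. ennreal ((sqrt (f x) - sqrt (h x))^2) \<partial>lborel)"

lemma hell_H2:
  assumes [measurable]: "f \<in> borel_measurable borel" "h \<in> borel_measurable borel"
  shows "hellinger f h = sqrt (1/2 * enn2real (H2 f h))"
  unfolding hellinger_def H2_def by (subst integral_eq_nn_integral) auto

lemma alg:
  fixes a b c d :: real
  assumes "0 \<le> a" "0 \<le> b" "0 \<le> c" "0 \<le> d" "c * d = 1"
  shows "d * (sqrt (a * c) - sqrt b)^2 = (sqrt a - sqrt (b * d))^2"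
proof -
  have cd: "sqrt c * sqrt d = 1" using assms by (metis real_sqrt_mult real_sqrt_one)
  have "d * (sqrt (a * c) - sqrt b)^2 = (sqrt d)^2 * (sqrt a * sqrt c - sqrt b)^2"
    using assms by (simp add: real_sqrt_mult)
  also have "\<dots> = (sqrt a * (sqrt c * sqrt d) - sqrt b * sqrt d)^2"
    by (simp add: power_mult_distrib[symmetric] algebra_simps)
  also have "\<dots> = (sqrt a - sqrt (b * d))^2"
    by (simp add: cd real_sqrt_mult)
  finally show ?thesis .
qed

lemma pushfwd_meas[measurable]:
  assumes "diffeo T" "g \<in> borel_measurable borel"
  shows "pushfwd T g \<in> borel_measurable borel"
  using assms(2) diffeo_meas[OF assms(1)] jac_meas[OF assms(1)] unfolding pushfwd_def by measurable

lemma pullback_meas[measurable]: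
  assumes "diffeo T" "g \<in> borel_measurable borel"
  shows "pullback T g \<in> borel_measurable borel"
  using assms(2) diffeo_meas[OF assms(1)] jac_meas[OF assms(1)] unfolding pullback_def by measurable

lemma pushfwd_nn: "(\<And>x. 0 \<le> g x) \<Longrightarrow> 0 \<le> pushfwd T g u"
  by (simp add: pushfwd_def)

lemma pullback_nn: "(\<And>x. 0 \<le> g x) \<Longrightarrow> 0 \<le> pullback T g u"
  by (simp add: pullback_def)

lemma H2_cov:
  assumes dT: "diffeo T" and g[measurable]: "g \<in> borel_measurable borel" and f[measurable]: "f \<in> borel_measurable borel"
    and gnn: "\<And>x. 0 \<le> g x" and fnn: "\<And>x. 0 \<le> f x"
  shows "H2 (pushfwd T g) f = H2 g (pullback T f)"
proof -
  note [measurable] = pushfwd_meas[OF dT] diffeo_meas[OF dT] jac_meas[OF dT]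
  have "H2 (pushfwd T g) f = (\<integral>\<^sup>+x. ennreal (\<bar>jac_det T x\<bar> * (sqrt (pushfwd T g (T x)) - sqrt (f (T x)))^2) \<partial>lborel)"
    unfolding H2_def by (rule cov[OF dT]) auto
  also have "\<dots> = (\<integral>\<^sup>+x. ennreal ((sqrt (g x) - sqrt (pullback T f x))^2) \<partial>lborel)"
  proof (rule nn_integral_cong)
    fix x
    have "\<bar>jac_det (inv T) (T x)\<bar> * \<bar>jac_det T x\<bar> = 1" by (rule jac_inv[OF dT])
    then have "\<bar>jac_det T x\<bar> * (sqrt (g x * \<bar>jac_det (inv T) (T x)\<bar>) - sqrt (f (T x)))^2
          = (sqrt (g x) - sqrt (f (T x) * \<bar>jac_det T x\<bar>))^2"
      by (intro alg) (auto simp: gnn fnn)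
    then show "ennreal (\<bar>jac_det T x\<bar> * (sqrt (pushfwd T g (T x)) - sqrt (f (T x)))^2)
        = ennreal ((sqrt (g x) - sqrt (pullback T f x))^2)"
      by (simp add: pushfwd_def pullback_def diffeo_inv_f_f[OF dT])
  qed
  finally show ?thesis unfolding H2_def .
qed

lemma hell_cov:
  assumes dT: "diffeo T" and g: "g \<in> borel_measurable borel" and f: "f \<in> borel_measurable borel"
    and gnn: "\<And>x. 0 \<le> g x" and fnn: "\<And>x. 0 \<le> f x"
  shows "hellinger (pushfwd T g) f = hellinger g (pullback T f)"
proof -
  have "hellinger (pushfwd T g) f = sqrt (1/2 * enn2real (H2 (pushfwd T g) f))"
    by (rule hell_H2[OF pushfwd_meas[OF dT g] f])
  also have "\<dots> = sqrt (1/2 * enn2real (H2 g (pullback T f)))"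
    by (simp only: H2_cov[OF assms])
  also have "\<dots> = hellinger g (pullback T f)"
    by (rule hell_H2[OF g pullback_meas[OF dT f], symmetric])
  finally show ?thesis .
qed

lemma nn_push:
  assumes dT: "diffeo T" and g[measurable]: "g \<in> borel_measurable borel" and gnn: "\<And>x. 0 \<le> g x"
  shows "(\<integral>\<^sup>+u. ennreal (pushfwd T g u) \<partial>lborel) = (\<integral>\<^sup>+x. ennreal (g x) \<partial>lborel)"
proof -
  note [measurable] = pushfwd_meas[OF dT] diffeo_meas[OF dT] jac_meas[OF dT]
  have "(\<integral>\<^sup>+u. ennreal (pushfwd T g u) \<partial>lborel) = (\<integral>\<^sup>+x. ennreal (\<bar>jac_det T x\<bar> * pushfwd T g (T x)) \<partial>lborel)"
    by (rule cov[OF dT]) (auto intro: pushfwd_nn gnn)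
  also have "\<dots> = (\<integral>\<^sup>+x. ennreal (g x) \<partial>lborel)"
  proof (rule nn_integral_cong)
    fix x
    have "\<bar>jac_det (inv T) (T x)\<bar> * \<bar>jac_det T x\<bar> = 1" by (rule jac_inv[OF dT])
    then show "ennreal (\<bar>jac_det T x\<bar> * pushfwd T g (T x)) = ennreal (g x)"
      by (simp add: pushfwd_def diffeo_inv_f_f[OF dT] algebra_simps)
  qed
  finally show ?thesis .
qed

lemma hell_tri:
  assumes [measurable]: "f \<in> borel_measurable borel" "g \<in> borel_measurable borel" "h \<in> borel_measurable borel"
    and nn: "\<And>x. 0 \<le> f x" "\<And>x. 0 \<le> g x" "\<And>x. 0 \<le> h x"
    and i: "integrable lborel f" "integrable lborel g" "integrable lborel h"
  shows "hellinger f h \<le> hellinger f g + hellinger g h"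
proof -
  have sq: "(sqrt u - sqrt v)^2 \<le> u + v" if "0 \<le> u" "0 \<le> v" for u v :: real
    using that by (simp add: power2_diff)
  have int2: "integrable lborel (\<lambda>x. (sqrt (u x) - sqrt (v x))^2)"
    if [measurable]: "u \<in> borel_measurable borel" "v \<in> borel_measurable borel"
      and "\<And>x. 0 \<le> u x" "\<And>x. 0 \<le> v x" "integrable lborel u" "integrable lborel v" for u v
  proof (rule Bochner_Integration.integrable_bound[where f="\<lambda>x. u x + v x"])
    show "integrable lborel (\<lambda>x. u x + v x)" using that by simp
    show "AE x in lborel. norm ((sqrt (u x) - sqrt (v x))^2) \<le> norm (u x + v x)"
      using that sq by simp
  qed measurable
  have "sqrt (\<integral>x. ((sqrt (f x) - sqrt (g x)) + (sqrt (g x) - sqrt (h x)))^2 \<partial>lborel)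
      \<le> sqrt (\<integral>x. (sqrt (f x) - sqrt (g x))^2 \<partial>lborel) + sqrt (\<integral>x. (sqrt (g x) - sqrt (h x))^2 \<partial>lborel)"
    by (rule L2_tri) (auto intro!: int2 nn i)
  then have "sqrt (\<integral>x. (sqrt (f x) - sqrt (h x))^2 \<partial>lborel)
      \<le> sqrt (\<integral>x. (sqrt (f x) - sqrt (g x))^2 \<partial>lborel) + sqrt (\<integral>x. (sqrt (g x) - sqrt (h x))^2 \<partial>lborel)"
    by simp
  then have "sqrt (1/2) * sqrt (\<integral>x. (sqrt (f x) - sqrt (h x))^2 \<partial>lborel)
      \<le> sqrt (1/2) * sqrt (\<integral>x. (sqrt (f x) - sqrt (g x))^2 \<partial>lborel) + sqrt (1/2) * sqrt (\<integral>x. (sqrt (g x) - sqrt (h x))^2 \<partial>lborel)"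
    by (simp add: distrib_left[symmetric])
  then show ?thesis by (simp only: hellinger_def real_sqrt_mult)
qed


theorem proposition4p1:
  fixes fU :: "real^'n \<Rightarrow> real"
    and fX :: "nat \<Rightarrow> real^'n \<Rightarrow> real"
    and Q :: "nat \<Rightarrow> real^'n \<Rightarrow> real^'n"
    and L :: nat and \<eta> \<omega> :: real
  assumes L: "L \<ge> 1"
    and dU: "is_density fU"
    and dX: "\<And>l. l \<in> {1..L} \<Longrightarrow> is_density (fX l)"
    and dQ: "\<And>l. l \<in> {1..L} \<Longrightarrow> diffeo (Q l)"
    and eta: "0 < \<eta>" "\<eta> < 1"
    and omega: "0 \<le> \<omega>" "\<omega> < 1"
    and a: "\<And>l. 1 \<le> l \<Longrightarrow> l < L \<Longrightarrow> hellinger (fX l) (fX (l+1)) \<le> \<eta>"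
    and b: "\<And>l. 1 \<le> l \<Longrightarrow> l < L \<Longrightarrow>
          hellinger (pushfwd (Q (l+1)) fU) (pullback (comp_upto Q l) (fX (l+1)))
          \<le> \<omega> * hellinger fU (pullback (comp_upto Q l) (fX (l+1)))"
    and c: "hellinger (pushfwd (Q 1) fU) (fX 1) \<le> \<omega> * \<eta>"
  shows "hellinger (pushfwd (comp_upto Q L) fU) (fX L) \<le> \<omega> / (1 - \<omega>) * \<eta>"
proof -
  define T where "T l = comp_upto Q l" for l
  define K where "K = \<omega> / (1 - \<omega>) * \<eta>"
  have dT: "l \<le> L \<Longrightarrow> diffeo (T l)" for l using diffeo_comp_upto[OF dQ] by (simp add: T_def)
  have fUm: "fU \<in> borel_measurable borel" and fUn: "\<And>x. 0 \<le> fU x" and fUi: "integrable lborel fU"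
    and fU1: "integral\<^sup>L lborel fU = 1"
    using dU by (simp_all add: is_density_def)
  have fXm: "fX l \<in> borel_measurable borel" and fXn: "\<And>x. 0 \<le> fX l x" and fXi: "integrable lborel (fX l)"
    if "l \<in> {1..L}" for l
    using dX[OF that] by (simp_all add: is_density_def)
  have nnU: "(\<integral>\<^sup>+x. ennreal (fU x) \<partial>lborel) = ennreal 1"
    using nn_integral_eq_integral[OF fUi] fUn fU1 by simp
  have pm: "pushfwd (T l) fU \<in> borel_measurable borel" if "l \<le> L" for l
    using pushfwd_meas[OF dT[OF that] fUm] .
  have pn: "\<And>x. 0 \<le> pushfwd (T l) fU x" for l using pushfwd_nn[OF fUn] .
  have pint: "integrable lborel (pushfwd (T l) fU)" if "l \<le> L" for l
  proof (rule integrableI_nonneg)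
    show "pushfwd (T l) fU \<in> borel_measurable lborel" using pm[OF that] by simp
    show "AE x in lborel. 0 \<le> pushfwd (T l) fU x" using pn by simp
    show "(\<integral>\<^sup>+x. ennreal (pushfwd (T l) fU x) \<partial>lborel) < \<infinity>"
      using nn_push[OF dT[OF that] fUm fUn] nnU by simp
  qed
  have K0: "\<omega> * \<eta> \<le> K"
  proof -
    have "1 \<le> 1 / (1 - \<omega>)" using omega by simp
    then have "\<omega> * \<eta> * 1 \<le> \<omega> * \<eta> * (1 / (1 - \<omega>))"
      using omega eta by (intro mult_left_mono) auto
    then show ?thesis by (simp add: K_def)
  qed
  have Kstep: "\<omega> * (K + \<eta>) = K"
    using omega by (simp add: K_def field_simps)
  have main: "1 \<le> l \<longrightarrow> l \<le> L \<longrightarrow> hellinger (pushfwd (T l) fU) (fX l) \<le> K" for l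
  proof (induct l)
    case 0 then show ?case by simp
  next
    case (Suc l)
    show ?case
    proof (intro impI)
      assume l1: "1 \<le> Suc l" and lL: "Suc l \<le> L"
      show "hellinger (pushfwd (T (Suc l)) fU) (fX (Suc l)) \<le> K"
      proof (cases "l = 0")
        case True
        then have "T (Suc l) = Q 1" by (simp add: T_def)
        then show ?thesis using c K0 True by simp
      next
        case False
        then have l1': "1 \<le> l" and lL': "l < L" using lL by auto
        have IH: "hellinger (pushfwd (T l) fU) (fX l) \<le> K" using Suc l1' lL' by simp
        have dQ': "diffeo (Q (Suc l))" using dQ lL by simp
        have dTl: "diffeo (T l)" using dT lL' by simp
        have inS: "Suc l \<in> {1..L}" and inl: "l \<in> {1..L}" using lL l1' by auto
        have "T (Suc l) = T l \<circ> Q (Suc l)" by (simp add: T_def)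
        then have "pushfwd (T (Suc l)) fU = pushfwd (T l) (pushfwd (Q (Suc l)) fU)"
          by (simp add: pushfwd_comp[OF dTl dQ'])
        then have "hellinger (pushfwd (T (Suc l)) fU) (fX (Suc l))
            = hellinger (pushfwd (Q (Suc l)) fU) (pullback (T l) (fX (Suc l)))"
          by (simp add: hell_cov[OF dTl pushfwd_meas[OF dQ' fUm] fXm[OF inS] pushfwd_nn[OF fUn] fXn[OF inS]])
        also have "\<dots> \<le> \<omega> * hellinger fU (pullback (T l) (fX (Suc l)))"
          using b[OF l1' lL'] by (simp add: T_def)
        also have "hellinger fU (pullback (T l) (fX (Suc l))) = hellinger (pushfwd (T l) fU) (fX (Suc l))"
          by (simp add: hell_cov[OF dTl fUm fXm[OF inS] fUn fXn[OF inS]])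
        also have "hellinger (pushfwd (T l) fU) (fX (Suc l))
            \<le> hellinger (pushfwd (T l) fU) (fX l) + hellinger (fX l) (fX (Suc l))"
          by (rule hell_tri) (use pm pn pint fXm fXn fXi inS inl lL' in auto)
        also have "\<dots> \<le> K + \<eta>"
          using IH a[OF l1' lL'] by simp
        finally have "hellinger (pushfwd (T (Suc l)) fU) (fX (Suc l)) \<le> \<omega> * (K + \<eta>)"
          using omega by (simp add: mult_left_mono)
        then show ?thesis using Kstep by simp
      qed
    qed
  qed
  show ?thesis using main[of L] L by (simp add: T_def K_def)
qed

end
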